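(* Let $n\ge 1$ and let $\boldsymbol{\theta}\mapsto \ket{\phi(\boldsymbol{\theta})}$, $\boldsymbol{\theta}\in\mathbb{R}^m$, be any smooth map into normalized pure states of $n$ qubits (Hilbert space $\mathbb{C}^{2^n}$). For a unitary $U\in U(2^n)$ and $\boldsymbol{s}\in\{0,1\}^n$ let $p_{\boldsymbol{s}}^U(\boldsymbol{\theta}) := \bra{\phi(\boldsymbol{\theta})}U^{\dagger}\Pi_{\boldsymbol{s}}U\ket{\phi(\boldsymbol{\theta})}$, where $\Pi_{\boldsymbol{s}}=\ket{\boldsymbol{s}}\bra{\boldsymbol{s}}$ is the computational-basis projector. Then for all $\boldsymbol{\theta}$ and all $i,j\in\{1,\dots,m\}$, $$[\mathcal{F}_Q(\boldsymbol{\theta})]_{ij} = 2(2^n+1)\sum_{\boldsymbol{s}\in\{0,1\}^n}\mathbb{E}_{U\sim\mu_H}\left[\frac{\partial p_{\boldsymbol{s}}^U(\boldsymbol{\theta})}{\partial\theta_i}\frac{\partial p_{\boldsymbol{s}}^U(\boldsymbol{\theta})}{\partial\theta_j}\right],$$ where $\mu_H$ is the Haar probability measure on $U(2^n)$.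
   Context: The quantum Fisher information matrix (QFIM) of the parameterized pure state is the $m\times m$ real matrix with entries $$[\mathcal{F}_Q(\boldsymbol{\theta})]_{ij} = 4\,\mathrm{Re}\left[\frac{\partial\bra{\phi(\boldsymbol{\theta})}}{\partial\theta_i}\frac{\partial\ket{\phi(\boldsymbol{\theta})}}{\partial\theta_j} - \frac{\partial\bra{\phi(\boldsymbol{\theta})}}{\partial\theta_i}\ket{\phi(\boldsymbol{\theta})}\bra{\phi(\boldsymbol{\theta})}\frac{\partial\ket{\phi(\boldsymbol{\theta})}}{\partial\theta_j}\right],$$ equivalently twice the Hessian at $\boldsymbol{\epsilon}=0$ of the infidelity $1-|\langle\phi(\boldsymbol{\theta})|\phi(\boldsymbol{\theta}+\boldsymbol{\epsilon})\rangle|^2$ with respect to $\boldsymbol{\epsilon}$. *)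

theory Defs
  imports "HOL-Analysis.Analysis" "HOL-Probability.Probability"
begin

text \<open>Hilbert space of n qubits: complex^'d with CARD('d) = 2^n; the computational
basis vectors are indexed by the elements of 'd (a relabelling of {0,1}^n).\<close>

definition braket :: "complex^'d \<Rightarrow> complex^'d \<Rightarrow> complex" where
  "braket a b = (\<Sum>k\<in>UNIV. cnj (a $ k) * b $ k)"

definition cadj :: "complex^'d^'d \<Rightarrow> complex^'d^'d" where
  "cadj U = (\<chi> i j. cnj (U $ j $ i))"

definition unitary_group :: "(complex^'d^'d) set" where
  "unitary_group = {U. U ** cadj U = mat 1 \<and> cadj U ** U = mat 1}"

definition basis_proj :: "'d::finite \<Rightarrow> complex^'d^'d" where
  "basis_proj s = (\<chi> a b. if a = s \<and> b = s then 1 else 0)"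

definition partial :: "'m::finite \<Rightarrow> (real^'m \<Rightarrow> 'b::real_normed_vector) \<Rightarrow> real^'m \<Rightarrow> 'b" where
  "partial i g x = vector_derivative (\<lambda>t. g (x + t *\<^sub>R axis i 1)) (at 0)"

fun iter_partial :: "'m::finite list \<Rightarrow> (real^'m \<Rightarrow> 'b::real_normed_vector) \<Rightarrow> real^'m \<Rightarrow> 'b" where
  "iter_partial [] g = g"
| "iter_partial (i # is) g = partial i (iter_partial is g)"

definition smooth_map :: "(real^'m::finite \<Rightarrow> 'b::real_normed_vector) \<Rightarrow> bool" where
  "smooth_map g \<longleftrightarrow> (\<forall>is. continuous_on UNIV (iter_partial is g) \<and>
      (\<forall>i x. (\<lambda>t. iter_partial is g (x + t *\<^sub>R axis i 1)) differentiable (at 0)))"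

definition qfim :: "(real^'m::finite \<Rightarrow> complex^'d::finite) \<Rightarrow> real^'m \<Rightarrow> 'm \<Rightarrow> 'm \<Rightarrow> real" where
  "qfim \<phi> \<theta> i j = 4 * Re (braket (partial i \<phi> \<theta>) (partial j \<phi> \<theta>)
      - braket (partial i \<phi> \<theta>) (\<phi> \<theta>) * braket (\<phi> \<theta>) (partial j \<phi> \<theta>))"

definition outcome_prob :: "(real^'m::finite \<Rightarrow> complex^'d::finite) \<Rightarrow> complex^'d^'d \<Rightarrow> 'd \<Rightarrow> real^'m \<Rightarrow> real" where
  "outcome_prob \<phi> U s \<theta> = Re (braket (\<phi> \<theta>) ((cadj U ** basis_proj s ** U) *v \<phi> \<theta>))"

definition haar_unitary :: "(complex^'d::finite^'d) measure \<Rightarrow> bool" where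
  "haar_unitary \<mu> \<longleftrightarrow> prob_space \<mu> \<and> space \<mu> = unitary_group \<and>
     sets \<mu> = sets (restrict_space borel unitary_group) \<and>
     (\<forall>V\<in>unitary_group. \<forall>A\<in>sets \<mu>. measure \<mu> ((\<lambda>U. V ** U) ` A) = measure \<mu> A)"

end

theory Submission
  imports Defs
begin

definition gg :: "complex \<Rightarrow> complex \<Rightarrow> complex \<Rightarrow> real" where
  "gg p q r = Re (cnj p * q) * Re (cnj p * r)"

lemma gg_poly:
  "gg (p1+p2) (q1+q2) (r1+r2) + gg (p1-p2) (q1-q2) (r1-r2)
   + gg (p1+\<i>*p2) (q1+\<i>*q2) (r1+\<i>*r2) + gg (p1-\<i>*p2) (q1-\<i>*q2) (r1-\<i>*r2)
   = 4 * (gg p1 q1 r1 + gg p2 q2 r2)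
     + 2 * (Re (2*(cnj p1*q1)*(cnj p2*r2) + (cnj p1*q1)*(cnj r2*p2) + (cnj p1*p1)*(cnj r2*q2))
          + Re (2*(cnj p2*q2)*(cnj p1*r1) + (cnj p2*q2)*(cnj r1*p1) + (cnj p2*p2)*(cnj r1*q1)))"
  by (simp add: gg_def algebra_simps power2_eq_square)

lemma gg_scale: "gg (complex_of_real c*p) (complex_of_real c*q) (complex_of_real c*r) = c^4 * gg p q r"
  by (simp add: gg_def algebra_simps power2_eq_square power4_eq_xxxx)

definition emb :: "'d \<Rightarrow> 'd \<Rightarrow> complex \<Rightarrow> complex \<Rightarrow> complex \<Rightarrow> complex \<Rightarrow> complex^'d^'d" where
  "emb a b m11 m12 m21 m22 = (\<chi> i j. if i = a then (if j = a then m11 else if j = b then m12 else 0)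
     else if i = b then (if j = a then m21 else if j = b then m22 else 0) else (if i = j then 1 else 0))"

lemma sum_two:
  fixes f :: "'d::finite \<Rightarrow> 'b::comm_monoid_add"
  assumes "a \<noteq> b" "\<And>k. k \<noteq> a \<Longrightarrow> k \<noteq> b \<Longrightarrow> f k = 0"
  shows "sum f UNIV = f a + f b"
proof -
  have "sum f UNIV = sum f {a,b}"
    by (rule sum.mono_neutral_right) (use assms in auto)
  then show ?thesis using assms by simp
qed

lemma sum_one:
  fixes f :: "'d::finite \<Rightarrow> 'b::comm_monoid_add"
  assumes "\<And>k. k \<noteq> a \<Longrightarrow> f k = 0"
  shows "sum f UNIV = f a"
proof -
  have "sum f UNIV = sum f {a}"
    by (rule sum.mono_neutral_right) (use assms in auto)
  then show ?thesis by simp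
qed

lemma emb_mulv:
  assumes "a \<noteq> b"
  shows "(emb a b m11 m12 m21 m22 *v x) $ i = (if i = a then m11 * x$a + m12 * x$b
     else if i = b then m21 * x$a + m22 * x$b else x$i)"
proof -
  have "(emb a b m11 m12 m21 m22 *v x) $ i = (\<Sum>j\<in>UNIV. emb a b m11 m12 m21 m22 $ i $ j * x $ j)"
    by (simp add: matrix_vector_mult_def)
  also have "\<dots> = (if i = a then m11 * x$a + m12 * x$b
     else if i = b then m21 * x$a + m22 * x$b else x$i)"
  proof (cases "i = a \<or> i = b")
    case True
    then show ?thesis using assms
      by (subst sum_two[OF assms]) (auto simp: emb_def)
  next
    case False
    then show ?thesis
      by (subst sum_one[where a=i]) (auto simp: emb_def)
  qed
  finally show ?thesis .
qed

lemma emb_unitary: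
  assumes ab: "a \<noteq> b"
    and r1: "cnj m11 * m11 + cnj m12 * m12 = 1" and r2: "cnj m21 * m21 + cnj m22 * m22 = 1"
    and r12: "m11 * cnj m21 + m12 * cnj m22 = 0"
    and c1: "cnj m11 * m11 + cnj m21 * m21 = 1" and c2: "cnj m12 * m12 + cnj m22 * m22 = 1"
    and c12: "cnj m11 * m12 + cnj m21 * m22 = 0"
  shows "emb a b m11 m12 m21 m22 \<in> unitary_group"
proof -
  let ?V = "emb a b m11 m12 m21 m22"
  have r21: "m21 * cnj m11 + m22 * cnj m12 = 0"
    using arg_cong[of _ _ cnj, OF r12] by (simp add: mult.commute)
  have c21: "cnj m12 * m11 + cnj m22 * m21 = 0"
    using arg_cong[of _ _ cnj, OF c12] by (simp add: mult.commute)
  have A: "(?V ** cadj ?V) $ i $ j = mat 1 $ i $ j" for i j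
  proof -
    have "(?V ** cadj ?V) $ i $ j = (\<Sum>k\<in>UNIV. ?V $ i $ k * cnj (?V $ j $ k))"
      by (simp add: matrix_matrix_mult_def cadj_def)
    also have "\<dots> = mat 1 $ i $ j"
    proof (cases "i = a \<or> i = b")
      case True
      then show ?thesis
        by (subst sum_two[OF ab]) (use ab r1 r2 r12 r21 in \<open>auto simp: emb_def mat_def mult.commute\<close>)
    next
      case False
      then show ?thesis
        by (subst sum_one[where a=i]) (auto simp: emb_def mat_def)
    qed
    finally show ?thesis .
  qed
  have B: "(cadj ?V ** ?V) $ i $ j = mat 1 $ i $ j" for i j
  proof -
    have "(cadj ?V ** ?V) $ i $ j = (\<Sum>k\<in>UNIV. cnj (?V $ k $ i) * ?V $ k $ j)"
      by (simp add: matrix_matrix_mult_def cadj_def)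
    also have "\<dots> = mat 1 $ i $ j"
    proof (cases "i = a \<or> i = b")
      case True
      then show ?thesis
        by (subst sum_two[OF ab]) (use ab c1 c2 c12 c21 in \<open>auto simp: emb_def mat_def mult.commute\<close>)
    next
      case False
      then show ?thesis
        by (subst sum_one[where a=i]) (auto simp: emb_def mat_def)
    qed
    finally show ?thesis .
  qed
  show ?thesis using A B by (simp add: unitary_group_def vec_eq_iff)
qed

definition cc :: complex where "cc = complex_of_real (1 / sqrt 2)"

lemma cnj_cc[simp]: "cnj cc = cc" by (simp add: cc_def)

lemma cc_cc: "cc * cc = 1/2"
proof -
  have "cc * cc = complex_of_real ((1/sqrt 2)*(1/sqrt 2))" by (simp only: cc_def of_real_mult)
  also have "(1/sqrt 2)*(1/sqrt 2) = (1/2::real)" by simp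
  finally show ?thesis by simp
qed

lemma cc_sq: "cnj cc * cc = 1/2" using cc_cc by simp

lemma cc_i: "\<i> * cc * (\<i> * cc) = -1/2" "cc * (\<i> * cc) = \<i>/2" "\<i> * cc * cc = \<i>/2"
  "(- \<i> * cc) * (- \<i> * cc) = -1/2" "cc * (- \<i> * cc) = -\<i>/2" "(- \<i> * cc) * cc = -\<i>/2"
  "\<i> * cc * (- \<i> * cc) = 1/2" "(- \<i> * cc) * (\<i> * cc) = 1/2"
proof -
  have "\<i> * cc * (\<i> * cc) = (\<i>*\<i>) * (cc*cc)" "cc * (\<i> * cc) = \<i> * (cc*cc)" "\<i> * cc * cc = \<i> * (cc*cc)"
   "(- \<i> * cc) * (- \<i> * cc) = (\<i>*\<i>) * (cc*cc)" "cc * (- \<i> * cc) = -\<i> * (cc*cc)" "(- \<i> * cc) * cc = -\<i> * (cc*cc)"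
   "\<i> * cc * (- \<i> * cc) = -(\<i>*\<i>) * (cc*cc)" "(- \<i> * cc) * (\<i> * cc) = -(\<i>*\<i>) * (cc*cc)"
    by (simp_all only: mult_ac minus_mult_minus minus_mult_left minus_mult_right)
  then show "\<i> * cc * (\<i> * cc) = -1/2" "cc * (\<i> * cc) = \<i>/2" "\<i> * cc * cc = \<i>/2"
  "(- \<i> * cc) * (- \<i> * cc) = -1/2" "cc * (- \<i> * cc) = -\<i>/2" "(- \<i> * cc) * cc = -\<i>/2"
  "\<i> * cc * (- \<i> * cc) = 1/2" "(- \<i> * cc) * (\<i> * cc) = 1/2"
    by (simp_all add: cc_cc)
qed

definition hmat :: "'d \<Rightarrow> 'd \<Rightarrow> complex^'d^'d" where "hmat a b = emb a b cc cc cc (-cc)"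
definition yd :: "'d \<Rightarrow> 'd \<Rightarrow> complex^'d^'d" where "yd a b = emb a b cc (\<i>*cc) cc (-\<i>*cc)"

lemma hmat_unitary: "a \<noteq> b \<Longrightarrow> hmat a b \<in> unitary_group"
  unfolding hmat_def by (rule emb_unitary) (simp_all add: cc_cc)

lemma yd_unitary: "a \<noteq> b \<Longrightarrow> yd a b \<in> unitary_group"
  unfolding yd_def by (rule emb_unitary) (simp_all add: cc_cc cc_i)

definition GG :: "complex^'d^'d \<Rightarrow> complex^'d \<Rightarrow> complex^'d \<Rightarrow> complex^'d \<Rightarrow> real" where
  "GG W x y z = (\<Sum>s\<in>UNIV. gg ((W *v x) $ s) ((W *v y) $ s) ((W *v z) $ s))"

definition Kp :: "complex^'d \<Rightarrow> complex^'d \<Rightarrow> complex^'d \<Rightarrow> 'd \<Rightarrow> 'd \<Rightarrow> real" where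
  "Kp x y z a b = Re (2*(cnj (x$a)*y$a)*(cnj (x$b)*z$b) + (cnj (x$a)*y$a)*(cnj (z$b)*x$b) + (cnj (x$a)*x$a)*(cnj (z$b)*y$b))"

lemma sum_split2:
  fixes f :: "'d::finite \<Rightarrow> 'b::comm_monoid_add"
  assumes "a \<noteq> b"
  shows "sum f UNIV = sum f (UNIV - {a,b}) + f a + f b"
proof -
  have "sum f UNIV = sum f (UNIV - {a,b}) + sum f {a,b}"
    by (metis add.commute finite subset_UNIV sum.subset_diff)
  then show ?thesis using assms by (simp add: add.assoc)
qed

lemma GG_emb:
  assumes ab: "a \<noteq> b"
  shows "GG (emb a b m11 m12 m21 m22) x y z = GG (mat 1) x y z
     - gg (x$a) (y$a) (z$a) - gg (x$b) (y$b) (z$b)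
     + gg (m11*x$a + m12*x$b) (m11*y$a + m12*y$b) (m11*z$a + m12*z$b)
     + gg (m21*x$a + m22*x$b) (m21*y$a + m22*y$b) (m21*z$a + m22*z$b)"
proof -
  have e: "sum (\<lambda>s. gg ((emb a b m11 m12 m21 m22 *v x) $ s) ((emb a b m11 m12 m21 m22 *v y) $ s) ((emb a b m11 m12 m21 m22 *v z) $ s)) (UNIV - {a,b})
      = sum (\<lambda>s. gg ((mat 1 *v x) $ s) ((mat 1 *v y) $ s) ((mat 1 *v z) $ s)) (UNIV - {a,b})"
    by (rule sum.cong) (auto simp: emb_mulv[OF ab])
  show ?thesis unfolding GG_def
    apply (subst (1 2) sum_split2[OF ab])
    using ab by (simp add: e emb_mulv[OF ab])
qed

lemma gg_cc: "gg (cc*p) (cc*q) (cc*r) = gg p q r / 4"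
proof -
  have h: "cnj (cc*p) * (cc*q) = (1/2) * (cnj p * q)" for p q
  proof -
    have "cnj (cc*p) * (cc*q) = (cc*cc) * (cnj p * q)" by (simp add: mult_ac)
    then show ?thesis by (simp only: cc_cc)
  qed
  show ?thesis unfolding gg_def h by simp
qed

lemma pair_id:
  assumes ab: "a \<noteq> b"
  shows "GG (hmat a b) x y z + GG (yd a b) x y z - 2 * GG (mat 1) x y z
    = (Kp x y z a b + Kp x y z b a) / 2 - gg (x$a) (y$a) (z$a) - gg (x$b) (y$b) (z$b)"
proof -
  have r: "cc * p + cc * q = cc * (p + q)"
     "cc * p + - cc * q = cc * (p - q)"
     "cc * p + \<i> * cc * q = cc * (p + \<i>*q)"
     "cc * p + - \<i> * cc * q = cc * (p - \<i>*q)" for p q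
    by (simp_all add: algebra_simps)
  show ?thesis
    unfolding hmat_def yd_def GG_emb[OF ab] r gg_cc
    using gg_poly[of "x$a" "x$b" "y$a" "y$b" "z$a" "z$b"]
    by (simp add: Kp_def algebra_simps)
qed

definition KK :: "complex^'d \<Rightarrow> complex^'d \<Rightarrow> complex^'d \<Rightarrow> real" where
  "KK x y z = Re (2 * braket x y * braket x z + braket x y * braket z x + braket x x * braket z y)"

lemma KK_sum: "KK x y z = (\<Sum>a\<in>UNIV. \<Sum>b\<in>UNIV. Kp x y z a b)"
proof -
  have "(\<Sum>a\<in>UNIV. \<Sum>b\<in>UNIV. Kp x y z a b) = Re (\<Sum>a\<in>UNIV. \<Sum>b\<in>UNIV.
      2*(cnj (x$a)*y$a)*(cnj (x$b)*z$b) + (cnj (x$a)*y$a)*(cnj (z$b)*x$b) + (cnj (x$a)*x$a)*(cnj (z$b)*y$b))"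
    by (simp add: Kp_def Re_sum)
  also have "\<dots> = KK x y z"
  proof -
    have p1: "braket x y * braket x z = (\<Sum>a\<in>UNIV. \<Sum>b\<in>UNIV. (cnj (x$a)*y$a)*(cnj (x$b)*z$b))"
      by (simp add: braket_def sum_product)
    have p2: "braket x y * braket z x = (\<Sum>a\<in>UNIV. \<Sum>b\<in>UNIV. (cnj (x$a)*y$a)*(cnj (z$b)*x$b))"
      by (simp add: braket_def sum_product)
    have p3: "braket x x * braket z y = (\<Sum>a\<in>UNIV. \<Sum>b\<in>UNIV. (cnj (x$a)*x$a)*(cnj (z$b)*y$b))"
      by (simp add: braket_def sum_product)
    show ?thesis unfolding KK_def mult.assoc[of 2] p1 p2 p3
      by (simp only: sum.distrib sum_distrib_left mult.assoc)
  qed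
  finally show ?thesis by simp
qed

lemma Kp_diag: "Kp x y z a a = 4 * gg (x$a) (y$a) (z$a)"
  by (simp add: Kp_def gg_def algebra_simps power2_eq_square)

lemma sum_if_neq:
  fixes f :: "'d::finite \<Rightarrow> 'b::ab_group_add"
  shows "(\<Sum>b\<in>UNIV. if a = b then 0 else f b) = sum f UNIV - f a"
proof -
  have "(\<Sum>b\<in>UNIV. if a = b then 0 else f b) = (\<Sum>b\<in>UNIV. f b - (if a = b then f b else 0))"
    by (rule sum.cong) auto
  also have "\<dots> = sum f UNIV - f a" by (simp add: sum_subtractf)
  finally show ?thesis .
qed

lemma GG_id: "GG (mat 1) x y z = (\<Sum>a\<in>UNIV. gg (x$a) (y$a) (z$a))"
  by (simp add: GG_def)

lemma main_id:
  "2 * (real CARD('d) + 1) * GG (mat 1) x y z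
   + (\<Sum>a\<in>UNIV. \<Sum>b\<in>UNIV. if a = b then 0 else
        GG (hmat a b) x y z + GG (yd a b) x y z - 2 * GG (mat 1) x y z)
   = KK x (y::complex^'d::finite) z"
proof -
  define gA where "gA a = gg (x$a) (y$a) (z$a)" for a
  define S where "S = sum gA UNIV"
  define K where "K a b = Kp x y z a b" for a b
  have "(\<Sum>a\<in>UNIV. \<Sum>b\<in>UNIV. if a = b then 0 else
        GG (hmat a b) x y z + GG (yd a b) x y z - 2 * GG (mat 1) x y z)
     = (\<Sum>a\<in>UNIV. \<Sum>b\<in>UNIV. (if a = b then 0 else K a b)/2 + (if a = b then 0 else K b a)/2
           - (if a = b then 0 else gA a) - (if a = b then 0 else gA b))"
    by (intro sum.cong refl) (simp add: pair_id K_def gA_def)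
  also have "\<dots> = (\<Sum>a\<in>UNIV. \<Sum>b\<in>UNIV. (if a = b then 0 else K a b))/2
       + (\<Sum>a\<in>UNIV. \<Sum>b\<in>UNIV. (if a = b then 0 else K b a))/2
       - (\<Sum>a\<in>UNIV. \<Sum>b\<in>UNIV. (if a = b then 0 else gA a))
       - (\<Sum>a\<in>UNIV. \<Sum>b\<in>UNIV. (if a = b then 0 else gA b))"
    by (simp add: sum.distrib sum_subtractf sum_divide_distrib)
  also have "(\<Sum>a\<in>UNIV. \<Sum>b\<in>UNIV. (if a = b then 0 else K b a)) = (\<Sum>a\<in>UNIV. \<Sum>b\<in>UNIV. (if a = b then 0 else K a b))"
    by (subst sum.swap) (intro sum.cong refl, auto)
  also have "(\<Sum>a\<in>UNIV. \<Sum>b\<in>UNIV. (if a = b then 0 else K a b)) = KK x y z - 4 * S"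
    by (simp add: sum_if_neq sum_subtractf KK_sum K_def Kp_diag S_def gA_def sum_distrib_left)
  also have "(\<Sum>a\<in>UNIV. \<Sum>b\<in>UNIV. (if a = b then 0 else gA a)) = real CARD('d) * S - S"
    by (simp add: sum_if_neq sum_subtractf S_def sum_distrib_right mult.commute)
  also have "(\<Sum>a\<in>UNIV. \<Sum>b\<in>UNIV. (if a = b then 0 else gA b)) = real CARD('d) * S - S"
    by (simp add: sum_if_neq sum_subtractf S_def)
  finally have e: "(\<Sum>a\<in>UNIV. \<Sum>b\<in>UNIV. if a = b then 0 else
        GG (hmat a b) x y z + GG (yd a b) x y z - 2 * GG (mat 1) x y z) = KK x y z - 4 * S - 2 * (real CARD('d) * S - S)"
    by simp
  have g: "GG (mat 1) x y z = S" by (simp add: GG_id S_def gA_def)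
  show ?thesis using e g by (simp add: algebra_simps)
qed

lemma cadj_mult: "cadj (A ** B) = cadj B ** cadj (A::complex^'d::finite^'d)"
  by (simp add: vec_eq_iff cadj_def matrix_matrix_mult_def mult.commute)

lemma cadj_cadj[simp]: "cadj (cadj A) = (A::complex^'d::finite^'d)"
  by (simp add: vec_eq_iff cadj_def)

lemma UG_mult: "U \<in> unitary_group \<Longrightarrow> V \<in> unitary_group \<Longrightarrow> V ** U \<in> unitary_group"
proof -
  assume U: "U \<in> unitary_group" and V: "V \<in> unitary_group"
  have "(V ** U) ** cadj (V ** U) = V ** (U ** cadj U) ** cadj V"
    by (simp add: cadj_mult matrix_mul_assoc)
  also have "\<dots> = mat 1" using U V by (simp add: unitary_group_def)
  finally have 1: "(V ** U) ** cadj (V ** U) = mat 1" .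
  have "cadj (V ** U) ** (V ** U) = cadj U ** (cadj V ** V) ** U"
    by (simp add: cadj_mult matrix_mul_assoc)
  also have "\<dots> = mat 1" using U V by (simp add: unitary_group_def)
  finally show ?thesis using 1 by (simp add: unitary_group_def)
qed

lemma UG_cadj: "V \<in> unitary_group \<Longrightarrow> cadj V \<in> unitary_group"
  by (simp add: unitary_group_def)

lemma braket_adj: "braket (A *v x) y = braket x (cadj A *v y)"
proof -
  have "braket (A *v x) y = (\<Sum>s\<in>UNIV. \<Sum>k\<in>UNIV. cnj (A$s$k) * cnj (x$k) * y$s)"
    by (simp add: braket_def matrix_vector_mult_def sum_distrib_right)
  also have "\<dots> = (\<Sum>k\<in>UNIV. \<Sum>s\<in>UNIV. cnj (A$s$k) * cnj (x$k) * y$s)"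
    by (rule sum.swap)
  also have "\<dots> = braket x (cadj A *v y)"
    by (simp add: braket_def matrix_vector_mult_def cadj_def sum_distrib_left mult_ac)
  finally show ?thesis .
qed

lemma braket_unitary: "U \<in> unitary_group \<Longrightarrow> braket (U *v x) (U *v y) = braket x y"
  by (simp add: braket_adj matrix_vector_mul_assoc unitary_group_def)

lemma KK_unitary: "U \<in> unitary_group \<Longrightarrow> KK (U *v x) (U *v y) (U *v z) = KK x y z"
  by (simp add: KK_def braket_unitary)

lemma GG_mult: "GG (V ** U) x y z = GG V (U *v x) (U *v y) (U *v z)"
  by (simp add: GG_def matrix_vector_mul_assoc)

lemma cont_mult_left: "continuous_on UNIV (\<lambda>U. V ** (U::complex^'d::finite^'d))"
  unfolding matrix_matrix_mult_def
  by (intro continuous_intros)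

lemma cont_GG: "continuous_on UNIV (\<lambda>U. GG (U::complex^'d::finite^'d) x y z)"
  unfolding GG_def gg_def matrix_vector_mult_def
  by (intro continuous_intros)

lemma meas_mu:
  assumes "haar_unitary \<mu>" "f \<in> borel_measurable borel"
  shows "f \<in> borel_measurable \<mu>"
proof -
  have "f \<in> borel_measurable (restrict_space borel unitary_group)"
    using assms(2) by (rule measurable_restrict_space1)
  then show ?thesis using assms(1) unfolding haar_unitary_def
    by (metis measurable_cong_sets)
qed

lemma haar_distr:
  assumes H: "haar_unitary \<mu>" and V: "V \<in> unitary_group"
  shows "distr \<mu> \<mu> (\<lambda>U. V ** U) = \<mu>"
proof -
  have P: "prob_space \<mu>" and sp: "space \<mu> = unitary_group"
    and se: "sets \<mu> = sets (restrict_space borel unitary_group)"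
    and inv: "\<forall>V\<in>unitary_group. \<forall>A\<in>sets \<mu>. measure \<mu> ((\<lambda>U. V ** U) ` A) = measure \<mu> A"
    using H by (auto simp: haar_unitary_def)
  have m0: "(\<lambda>U. V ** U) \<in> measurable (restrict_space borel unitary_group) (restrict_space borel unitary_group)"
    by (rule measurable_restrict_space3)
       (auto intro: borel_measurable_continuous_onI cont_mult_left UG_mult V)
  have m: "(\<lambda>U. V ** U) \<in> measurable \<mu> \<mu>"
    using m0 se by (metis measurable_cong_sets)
  show ?thesis
  proof (rule measure_eqI)
    show "sets (distr \<mu> \<mu> (\<lambda>U. V ** U)) = sets \<mu>" by simp
    fix A assume "A \<in> sets (distr \<mu> \<mu> (\<lambda>U. V ** U))"
    then have A: "A \<in> sets \<mu>" by simp
    then have Asub: "A \<subseteq> unitary_group" using sets.sets_into_space sp by blast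
    have pre: "(\<lambda>U. V ** U) -` A \<inter> space \<mu> = (\<lambda>U. cadj V ** U) ` A"
    proof
      show "(\<lambda>U. V ** U) -` A \<inter> space \<mu> \<subseteq> (\<lambda>U. cadj V ** U) ` A"
      proof
        fix U assume "U \<in> (\<lambda>U. V ** U) -` A \<inter> space \<mu>"
        then have "V ** U \<in> A" by auto
        moreover have "U = cadj V ** (V ** U)"
          using V by (simp add: matrix_mul_assoc unitary_group_def)
        ultimately show "U \<in> (\<lambda>U. cadj V ** U) ` A" by blast
      qed
      show "(\<lambda>U. cadj V ** U) ` A \<subseteq> (\<lambda>U. V ** U) -` A \<inter> space \<mu>"
      proof
        fix U assume "U \<in> (\<lambda>U. cadj V ** U) ` A"
        then obtain W where W: "W \<in> A" "U = cadj V ** W" by blast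
        have "V ** U = W" using V W(2) by (simp add: matrix_mul_assoc unitary_group_def)
        moreover have "U \<in> unitary_group" using W Asub V by (auto intro: UG_mult UG_cadj)
        ultimately show "U \<in> (\<lambda>U. V ** U) -` A \<inter> space \<mu>" using W(1) sp by auto
      qed
    qed
    have "emeasure (distr \<mu> \<mu> (\<lambda>U. V ** U)) A = emeasure \<mu> ((\<lambda>U. V ** U) -` A \<inter> space \<mu>)"
      using m A by (rule emeasure_distr)
    also have "\<dots> = emeasure \<mu> ((\<lambda>U. cadj V ** U) ` A)" by (simp add: pre)
    also have "\<dots> = ennreal (measure \<mu> ((\<lambda>U. cadj V ** U) ` A))"
      using P by (simp add: finite_measure.emeasure_eq_measure prob_space.axioms(1))
    also have "\<dots> = ennreal (measure \<mu> A)" using inv UG_cadj[OF V] A by simp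
    also have "\<dots> = emeasure \<mu> A"
      using P by (simp add: finite_measure.emeasure_eq_measure prob_space.axioms(1))
    finally show "emeasure (distr \<mu> \<mu> (\<lambda>U. V ** U)) A = emeasure \<mu> A" .
  qed
qed

lemma haar_integral:
  fixes f :: "complex^'d::finite^'d \<Rightarrow> real"
  assumes H: "haar_unitary \<mu>" and V: "V \<in> unitary_group" and f: "f \<in> borel_measurable borel"
  shows "(\<integral>U. f (V ** U) \<partial>\<mu>) = (\<integral>U. f U \<partial>\<mu>)"
proof -
  have se: "sets \<mu> = sets (restrict_space borel unitary_group)" using H by (simp add: haar_unitary_def)
  have m0: "(\<lambda>U. V ** U) \<in> measurable (restrict_space borel unitary_group) (restrict_space borel unitary_group)"
    by (rule measurable_restrict_space3)
       (auto intro: borel_measurable_continuous_onI cont_mult_left UG_mult V)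
  have m: "(\<lambda>U. V ** U) \<in> measurable \<mu> \<mu>"
    using m0 se by (metis measurable_cong_sets)
  have "(\<integral>U. f U \<partial>\<mu>) = (\<integral>U. f U \<partial>(distr \<mu> \<mu> (\<lambda>U. V ** U)))"
    using haar_distr[OF H V] by simp
  also have "\<dots> = (\<integral>U. f (V ** U) \<partial>\<mu>)"
    using m meas_mu[OF H f] by (rule integral_distr)
  finally show ?thesis by simp
qed

lemma integrable_UG:
  fixes f :: "complex^'d::finite^'d \<Rightarrow> real"
  assumes H: "haar_unitary \<mu>" and c: "continuous_on UNIV f" and b: "\<And>U. U \<in> unitary_group \<Longrightarrow> \<bar>f U\<bar> \<le> B"
  shows "integrable \<mu> f"
proof -
  have P: "prob_space \<mu>" and sp: "space \<mu> = unitary_group" using H by (auto simp: haar_unitary_def)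
  have FM: "finite_measure \<mu>" using P by (simp add: prob_space.axioms(1))
  show ?thesis
    by (rule finite_measure.integrable_const_bound[OF FM, where B=B])
       (auto intro!: AE_I2 b meas_mu[OF H] borel_measurable_continuous_onI c simp: sp)
qed

lemma UG_entry_le: assumes "U \<in> unitary_group" shows "cmod (U$s$k) \<le> 1"
proof -
  have "(U ** cadj U) $ s $ s = 1" using assms by (simp add: unitary_group_def mat_def)
  then have "(\<Sum>k\<in>UNIV. U$s$k * cnj (U$s$k)) = 1"
    by (simp add: matrix_matrix_mult_def cadj_def)
  moreover have "\<And>k. complex_of_real ((cmod (U$s$k))^2) = U$s$k * cnj (U$s$k)"
    by (rule complex_norm_square)
  ultimately have "(\<Sum>k\<in>UNIV. complex_of_real ((cmod (U$s$k))^2)) = 1"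
    by simp
  then have "complex_of_real (\<Sum>k\<in>UNIV. (cmod (U$s$k))^2) = 1" by simp
  then have S: "(\<Sum>k\<in>UNIV. (cmod (U$s$k))^2) = 1" using of_real_eq_1_iff by blast
  have "(cmod (U$s$k))^2 \<le> (\<Sum>k\<in>UNIV. (cmod (U$s$k))^2)"
    by (rule member_le_sum) auto
  then have "(cmod (U$s$k))^2 \<le> 1" using S by simp
  then show ?thesis by (simp add: power_le_one_iff)
qed

definition nsum :: "complex^'d::finite \<Rightarrow> real" where "nsum x = (\<Sum>k\<in>UNIV. cmod (x$k))"

lemma nsum_nonneg: "0 \<le> nsum x" by (simp add: nsum_def sum_nonneg)

lemma mulv_le: assumes "U \<in> unitary_group" shows "cmod ((U *v x) $ s) \<le> nsum x"
proof -
  have "cmod ((U *v x) $ s) = cmod (\<Sum>k\<in>UNIV. U$s$k * x$k)" by (simp add: matrix_vector_mult_def)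
  also have "\<dots> \<le> (\<Sum>k\<in>UNIV. cmod (U$s$k * x$k))" by (rule norm_sum)
  also have "\<dots> \<le> (\<Sum>k\<in>UNIV. cmod (x$k))"
  proof (rule sum_mono)
    fix k
    have "cmod (U$s$k) * cmod (x$k) \<le> 1 * cmod (x$k)"
      by (rule mult_right_mono) (auto simp: UG_entry_le[OF assms])
    then show "cmod (U$s$k * x$k) \<le> cmod (x$k)" by (simp add: norm_mult)
  qed
  finally show ?thesis by (simp add: nsum_def)
qed

lemma gg_le: "\<bar>gg p q r\<bar> \<le> (cmod p * cmod q) * (cmod p * cmod r)"
proof -
  have "\<bar>gg p q r\<bar> = \<bar>Re (cnj p * q)\<bar> * \<bar>Re (cnj p * r)\<bar>" by (simp add: gg_def abs_mult)
  also have "\<dots> \<le> cmod (cnj p * q) * cmod (cnj p * r)"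
    by (intro mult_mono abs_Re_le_cmod) auto
  finally show ?thesis by (simp add: norm_mult)
qed

lemma GG_le:
  fixes x :: "complex^'d::finite"
  assumes "U \<in> unitary_group"
  shows "\<bar>GG U x y z\<bar> \<le> real CARD('d) * ((nsum x * nsum y) * (nsum x * nsum z))"
proof -
  have "\<bar>GG U x y z\<bar> \<le> (\<Sum>s\<in>UNIV. \<bar>gg ((U *v x) $ s) ((U *v y) $ s) ((U *v z) $ s)\<bar>)"
    unfolding GG_def by (rule sum_abs)
  also have "\<dots> \<le> (\<Sum>s\<in>(UNIV::'d set). (nsum x * nsum y) * (nsum x * nsum z))"
  proof (rule sum_mono)
    fix s
    have a: "cmod ((U *v x) $ s) \<le> nsum x" "cmod ((U *v y) $ s) \<le> nsum y" "cmod ((U *v z) $ s) \<le> nsum z"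
      using mulv_le[OF assms] by auto
    show "\<bar>gg ((U *v x) $ s) ((U *v y) $ s) ((U *v z) $ s)\<bar> \<le> (nsum x * nsum y) * (nsum x * nsum z)"
      by (rule order_trans[OF gg_le]) (intro mult_mono a mult_nonneg_nonneg norm_ge_zero nsum_nonneg)
  qed
  finally show ?thesis by simp
qed

lemma GG_integral:
  fixes x y z :: "complex^'d::finite"
  assumes H: "haar_unitary \<mu>"
  shows "(\<integral>U. GG U x y z \<partial>\<mu>) = KK x y z / (2 * (real CARD('d) + 1))"
proof -
  have P: "prob_space \<mu>" and sp: "space \<mu> = unitary_group" using H by (auto simp: haar_unitary_def)
  define B where "B = real CARD('d) * ((nsum x * nsum y) * (nsum x * nsum z))"
  have intW: "integrable \<mu> (\<lambda>U. GG (W ** U) x y z)" if W: "W \<in> unitary_group" for W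
  proof (rule integrable_UG[OF H, where B=B])
    show "continuous_on UNIV (\<lambda>U. GG (W ** U) x y z)"
      by (rule continuous_on_compose2[OF cont_GG cont_mult_left]) auto
    show "\<bar>GG (W ** U) x y z\<bar> \<le> B" if "U \<in> unitary_group" for U
      unfolding B_def by (rule GG_le) (rule UG_mult[OF that W])
  qed
  have intG: "integrable \<mu> (\<lambda>U. GG U x y z)"
  proof -
    have c1: "cadj (mat 1) = (mat 1::complex^'d^'d)" by (simp add: vec_eq_iff cadj_def mat_def)
    have "(mat 1::complex^'d^'d) \<in> unitary_group" by (simp add: unitary_group_def c1)
    from intW[OF this] show ?thesis by simp
  qed
  have measG: "(\<lambda>U. GG U x y z) \<in> borel_measurable borel"
    by (rule borel_measurable_continuous_onI[OF cont_GG])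
  define T where "T a b U = (if a = b then 0 else
        GG (hmat a b ** U) x y z + GG (yd a b ** U) x y z - 2 * GG U x y z)" for a b U
  have intT: "integrable \<mu> (T a b)" for a b
    unfolding T_def
    by (cases "a = b") (auto intro!: integrable_diff Bochner_Integration.integrable_add intW intG hmat_unitary yd_unitary)
  have int0: "(\<integral>U. T a b U \<partial>\<mu>) = 0" for a b
  proof (cases "a = b")
    case True then show ?thesis by (simp add: T_def)
  next
    case False
    have "(\<integral>U. T a b U \<partial>\<mu>) = (\<integral>U. GG (hmat a b ** U) x y z \<partial>\<mu>) + (\<integral>U. GG (yd a b ** U) x y z \<partial>\<mu>)
        - 2 * (\<integral>U. GG U x y z \<partial>\<mu>)"
      unfolding T_def using False
      by (simp add: Bochner_Integration.integral_add integral_diff intW intG hmat_unitary yd_unitary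
          Bochner_Integration.integrable_add)
    also have "\<dots> = 0"
      using haar_integral[OF H hmat_unitary[OF False] measG] haar_integral[OF H yd_unitary[OF False] measG]
      by simp
    finally show ?thesis .
  qed
  have pw: "2 * (real CARD('d) + 1) * GG U x y z + (\<Sum>a\<in>UNIV. \<Sum>b\<in>UNIV. T a b U) = KK x y z"
    if U: "U \<in> unitary_group" for U
  proof -
    have "KK x y z = KK (U *v x) (U *v y) (U *v z)" using KK_unitary[OF U] by simp
    also have "\<dots> = 2 * (real CARD('d) + 1) * GG (mat 1) (U *v x) (U *v y) (U *v z)
     + (\<Sum>a\<in>UNIV. \<Sum>b\<in>UNIV. if a = b then 0 else
        GG (hmat a b) (U *v x) (U *v y) (U *v z) + GG (yd a b) (U *v x) (U *v y) (U *v z)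
         - 2 * GG (mat 1) (U *v x) (U *v y) (U *v z))"
      by (rule main_id[symmetric])
    also have "\<dots> = 2 * (real CARD('d) + 1) * GG U x y z + (\<Sum>a\<in>UNIV. \<Sum>b\<in>UNIV. T a b U)"
    proof -
      have e: "\<And>W. GG W (U *v x) (U *v y) (U *v z) = GG (W ** U) x y z" by (simp add: GG_mult)
      have m1: "mat 1 ** U = U" by (rule matrix_mul_lid)
      show ?thesis unfolding e T_def m1 by simp
    qed
    finally show ?thesis by simp
  qed
  have "KK x y z = (\<integral>U. KK x y z \<partial>\<mu>)"
    using P by (simp add: prob_space.prob_space)
  also have "\<dots> = (\<integral>U. 2 * (real CARD('d) + 1) * GG U x y z + (\<Sum>a\<in>UNIV. \<Sum>b\<in>UNIV. T a b U) \<partial>\<mu>)"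
    by (rule Bochner_Integration.integral_cong[OF refl]) (metis sp pw)
  also have "\<dots> = 2 * (real CARD('d) + 1) * (\<integral>U. GG U x y z \<partial>\<mu>) + (\<Sum>a\<in>UNIV. \<Sum>b\<in>UNIV. \<integral>U. T a b U \<partial>\<mu>)"
    by (simp add: Bochner_Integration.integral_add integral_sum intT intG integrable_sum)
  also have "\<dots> = 2 * (real CARD('d) + 1) * (\<integral>U. GG U x y z \<partial>\<mu>)"
    by (simp add: int0)
  finally show ?thesis by (simp add: field_simps)
qed

lemma deriv_sq:
  fixes \<psi> :: "real \<Rightarrow> complex^'d::finite" and U :: "complex^'d^'e::finite"
  assumes d: "(\<psi> has_vector_derivative a) (at 0)"
  shows "((\<lambda>t. (cmod ((U *v \<psi> t) $ s))^2) has_real_derivative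
           2 * Re (cnj ((U *v \<psi> 0) $ s) * (U *v a) $ s)) (at 0)"
proof -
  have bl: "bounded_linear (\<lambda>v. (U *v v) $ s)"
    by (rule bounded_linear_compose[OF bounded_linear_vec_nth matrix_vector_mul_bounded_linear])
  have c: "((\<lambda>t. (U *v \<psi> t) $ s) has_vector_derivative (U *v a) $ s) (at 0)"
    using bounded_linear.has_vector_derivative[OF bl d] by simp
  have re: "((\<lambda>t. Re ((U *v \<psi> t) $ s)) has_real_derivative Re ((U *v a) $ s)) (at 0)"
    using bounded_linear.has_vector_derivative[OF bounded_linear_Re c]
    by (simp add: has_real_derivative_iff_has_vector_derivative)
  have im: "((\<lambda>t. Im ((U *v \<psi> t) $ s)) has_real_derivative Im ((U *v a) $ s)) (at 0)"
    using bounded_linear.has_vector_derivative[OF bounded_linear_Im c]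
    by (simp add: has_real_derivative_iff_has_vector_derivative)
  have "((\<lambda>t. (Re ((U *v \<psi> t) $ s))^2 + (Im ((U *v \<psi> t) $ s))^2) has_real_derivative
      (2 * Re ((U *v \<psi> 0) $ s) * Re ((U *v a) $ s) + 2 * Im ((U *v \<psi> 0) $ s) * Im ((U *v a) $ s))) (at 0)"
    by (rule derivative_eq_intros re im refl | simp)+
  then show ?thesis
    by (simp add: cmod_power2 algebra_simps)
qed

lemma partial_from_deriv:
  assumes "((\<lambda>t. g (x + t *\<^sub>R axis i 1)) has_real_derivative D) (at 0)"
  shows "partial i g x = D"
  unfolding partial_def using assms
  by (simp add: has_real_derivative_iff_has_vector_derivative vector_derivative_at)

lemma smooth_dir:
  assumes "smooth_map \<phi>"
  shows "((\<lambda>t. \<phi> (x + t *\<^sub>R axis i 1)) has_vector_derivative partial i \<phi> x) (at 0)"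
proof -
  have "(\<lambda>t. iter_partial [] \<phi> (x + t *\<^sub>R axis i 1)) differentiable (at 0)"
    using assms unfolding smooth_map_def by blast
  then show ?thesis unfolding partial_def by (simp add: vector_derivative_works)
qed

lemma bp_mulv: "(basis_proj s *v w) $ k = (if k = s then w $ s else 0)"
proof -
  have "(basis_proj s *v w) $ k = (\<Sum>j\<in>UNIV. (if k = s \<and> j = s then 1 else 0) * w $ j)"
    by (simp add: basis_proj_def matrix_vector_mult_def)
  also have "\<dots> = (if k = s then w $ s else 0)"
    by (subst sum_one[where a=s]) auto
  finally show ?thesis .
qed

lemma outcome_eq:
  "outcome_prob \<phi> U s \<theta> = (cmod ((U *v \<phi> \<theta>) $ s))^2"
proof -
  let ?v = "\<phi> \<theta>"
  have "(cadj U ** basis_proj s ** U) *v ?v = cadj U *v (basis_proj s *v (U *v ?v))"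
    by (simp add: matrix_vector_mul_assoc matrix_mul_assoc)
  then have "braket ?v ((cadj U ** basis_proj s ** U) *v ?v) = braket (U *v ?v) (basis_proj s *v (U *v ?v))"
    by (metis braket_adj cadj_cadj)
  also have "\<dots> = cnj ((U *v ?v) $ s) * ((U *v ?v) $ s)"
    unfolding braket_def
    by (subst sum_one[where a=s]) (auto simp: bp_mulv)
  finally show ?thesis unfolding outcome_prob_def
    by (metis Re_complex_of_real complex_norm_square mult.commute)
qed

lemma partial_outcome:
  assumes "smooth_map \<phi>"
  shows "partial i (outcome_prob \<phi> U s) \<theta> = 2 * Re (cnj ((U *v \<phi> \<theta>) $ s) * (U *v partial i \<phi> \<theta>) $ s)"
proof (rule partial_from_deriv)
  have "((\<lambda>t. (cmod ((U *v \<phi> (\<theta> + t *\<^sub>R axis i 1)) $ s))^2) has_real_derivative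
           2 * Re (cnj ((U *v \<phi> (\<theta> + 0 *\<^sub>R axis i 1)) $ s) * (U *v partial i \<phi> \<theta>) $ s)) (at 0)"
    by (rule deriv_sq[OF smooth_dir[OF assms]])
  then show "((\<lambda>t. outcome_prob \<phi> U s (\<theta> + t *\<^sub>R axis i 1)) has_real_derivative
           2 * Re (cnj ((U *v \<phi> \<theta>) $ s) * (U *v partial i \<phi> \<theta>) $ s)) (at 0)"
    by (simp add: outcome_eq)
qed

lemma norm_sq_sum: "(norm (x::complex^'d::finite))^2 = (\<Sum>k\<in>UNIV. (cmod (x $ k))^2)"
  unfolding norm_vec_def L2_set_def by (simp add: sum_nonneg)

lemma braket_re0:
  assumes sm: "smooth_map \<phi>" and nm: "\<forall>\<theta>. norm (\<phi> \<theta>) = 1"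
  shows "Re (braket (\<phi> \<theta>) (partial i \<phi> \<theta>)) = 0"
proof -
  define \<psi> where "\<psi> t = \<phi> (\<theta> + t *\<^sub>R axis i 1)" for t
  have d: "(\<psi> has_vector_derivative partial i \<phi> \<theta>) (at 0)"
    unfolding \<psi>_def by (rule smooth_dir[OF sm])
  have D: "((\<lambda>t. \<Sum>k\<in>UNIV. (cmod ((mat 1 *v \<psi> t) $ k))^2) has_real_derivative
       (\<Sum>k\<in>UNIV. 2 * Re (cnj ((mat 1 *v \<psi> 0) $ k) * (mat 1 *v partial i \<phi> \<theta>) $ k))) (at 0)"
    by (rule DERIV_sum) (rule deriv_sq[OF d])
  have "(\<lambda>t. \<Sum>k\<in>UNIV. (cmod ((mat 1 *v \<psi> t) $ k))^2) = (\<lambda>t. 1)"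
  proof
    fix t
    show "(\<Sum>k\<in>UNIV. (cmod ((mat 1 *v \<psi> t) $ k))^2) = 1"
      using norm_sq_sum[of "\<psi> t"] nm unfolding \<psi>_def by simp
  qed
  with D have D1: "((\<lambda>t. 1::real) has_real_derivative
       (\<Sum>k\<in>UNIV. 2 * Re (cnj ((mat 1 *v \<psi> 0) $ k) * (mat 1 *v partial i \<phi> \<theta>) $ k))) (at 0)"
    by simp
  have "(\<Sum>k\<in>UNIV. 2 * Re (cnj ((mat 1 *v \<psi> 0) $ k) * (mat 1 *v partial i \<phi> \<theta>) $ k)) = 0"
    using DERIV_unique[OF D1 DERIV_const] .
  moreover have "(\<Sum>k\<in>UNIV. 2 * Re (cnj ((mat 1 *v \<psi> 0) $ k) * (mat 1 *v partial i \<phi> \<theta>) $ k))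
      = 2 * Re (braket (\<phi> \<theta>) (partial i \<phi> \<theta>))"
    by (simp add: \<psi>_def braket_def Re_sum sum_distrib_left)
  ultimately show ?thesis by simp
qed

lemma braket_self: "norm x = 1 \<Longrightarrow> braket x x = 1"
proof -
  assume n: "norm x = 1"
  have "braket x x = (\<Sum>k\<in>UNIV. complex_of_real ((cmod (x$k))^2))"
    unfolding braket_def by (intro sum.cong refl) (metis complex_norm_square mult.commute)
  also have "\<dots> = complex_of_real ((norm x)^2)" by (simp add: norm_sq_sum)
  finally show ?thesis using n by simp
qed

lemma braket_swap: "braket y x = cnj (braket x y)"
  by (simp add: braket_def mult.commute)

lemma int_s:
  fixes x y z :: "complex^'d::finite"
  assumes H: "haar_unitary \<mu>"
  shows "integrable \<mu> (\<lambda>U. gg ((U *v x) $ s) ((U *v y) $ s) ((U *v z) $ s))"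
proof (rule integrable_UG[OF H, where B="(nsum x * nsum y) * (nsum x * nsum z)"])
  show "continuous_on UNIV (\<lambda>U. gg ((U *v x) $ s) ((U *v y) $ s) ((U *v z) $ s))"
    unfolding gg_def matrix_vector_mult_def by (intro continuous_intros)
  fix U :: "complex^'d^'d" assume U: "U \<in> unitary_group"
  have a: "cmod ((U *v x) $ s) \<le> nsum x" "cmod ((U *v y) $ s) \<le> nsum y" "cmod ((U *v z) $ s) \<le> nsum z"
    using mulv_le[OF U] by auto
  show "\<bar>gg ((U *v x) $ s) ((U *v y) $ s) ((U *v z) $ s)\<bar> \<le> (nsum x * nsum y) * (nsum x * nsum z)"
    by (rule order_trans[OF gg_le]) (intro mult_mono a mult_nonneg_nonneg norm_ge_zero nsum_nonneg)
qed

theorem theorem1: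
  fixes n :: nat
    and \<phi> :: "real^'m::finite \<Rightarrow> complex^'d::finite"
    and \<mu> :: "(complex^'d^'d) measure"
  assumes "n \<ge> 1"
    and "CARD('d) = 2 ^ n"
    and "smooth_map \<phi>"
    and "\<forall>\<theta>. norm (\<phi> \<theta>) = 1"
    and "haar_unitary \<mu>"
  shows "\<forall>\<theta> i j. qfim \<phi> \<theta> i j =
    2 * (2 ^ n + 1) * (\<Sum>s\<in>UNIV.
       integral\<^sup>L \<mu> (\<lambda>U. partial i (outcome_prob \<phi> U s) \<theta> * partial j (outcome_prob \<phi> U s) \<theta>))"
proof (intro allI)
  fix \<theta> i j
  define x where "x = \<phi> \<theta>"
  define a where "a = partial i \<phi> \<theta>"
  define b where "b = partial j \<phi> \<theta>"
  have pp: "partial i (outcome_prob \<phi> U s) \<theta> * partial j (outcome_prob \<phi> U s) \<theta>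
      = 4 * gg ((U *v x) $ s) ((U *v a) $ s) ((U *v b) $ s)" for U s
    by (simp add: partial_outcome[OF assms(3)] gg_def x_def a_def b_def algebra_simps)
  have "(\<Sum>s\<in>UNIV. integral\<^sup>L \<mu> (\<lambda>U. partial i (outcome_prob \<phi> U s) \<theta> * partial j (outcome_prob \<phi> U s) \<theta>))
     = (\<Sum>s\<in>UNIV. 4 * integral\<^sup>L \<mu> (\<lambda>U. gg ((U *v x) $ s) ((U *v a) $ s) ((U *v b) $ s)))"
    by (simp add: pp)
  also have "\<dots> = 4 * integral\<^sup>L \<mu> (\<lambda>U. \<Sum>s\<in>UNIV. gg ((U *v x) $ s) ((U *v a) $ s) ((U *v b) $ s))"
    by (simp add: integral_sum int_s[OF assms(5)] sum_distrib_left)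
  also have "\<dots> = 4 * (KK x a b / (2 * (real CARD('d) + 1)))"
    using GG_integral[OF assms(5), of x a b] by (simp add: GG_def)
  finally have R: "(\<Sum>s\<in>UNIV. integral\<^sup>L \<mu> (\<lambda>U. partial i (outcome_prob \<phi> U s) \<theta> * partial j (outcome_prob \<phi> U s) \<theta>))
     = 4 * (KK x a b / (2 * (2 ^ n + 1)))"
    using assms(2) by simp
  have ra: "Re (braket x a) = 0" unfolding x_def a_def by (rule braket_re0[OF assms(3,4)])
  have rb: "Re (braket x b) = 0" unfolding x_def b_def by (rule braket_re0[OF assms(3,4)])
  have xx: "braket x x = 1" unfolding x_def using assms(4) by (simp add: braket_self)
  have "qfim \<phi> \<theta> i j = 4 * KK x a b"
    unfolding qfim_def KK_def x_def[symmetric] a_def[symmetric] b_def[symmetric]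
    using ra rb xx by (simp add: braket_swap[of a x] braket_swap[of b x] braket_swap[of b a] algebra_simps)
  then show "qfim \<phi> \<theta> i j = 2 * (2 ^ n + 1) * (\<Sum>s\<in>UNIV.
       integral\<^sup>L \<mu> (\<lambda>U. partial i (outcome_prob \<phi> U s) \<theta> * partial j (outcome_prob \<phi> U s) \<theta>))"
  proof -
    have "(2::real) * (2^n+1) \<noteq> 0" by (metis add_pos_pos mult_pos_pos zero_less_one zero_less_numeral zero_less_power less_irrefl)
    then show ?thesis unfolding R \<open>qfim \<phi> \<theta> i j = 4 * KK x a b\<close> by (simp add: field_simps)
  qed
qed
end
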